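(* Let $\widehat\Gamma$ be a Harnack graph with controlled, uniformly lazy weights, let $K$ be a set of vertices, and suppose $\Gamma:=\widehat\Gamma\setminus K$ is an infinite inner uniform subgraph of $\widehat\Gamma$. If $\widehat\Gamma$ is $S$-transient with respect to $K$, then $h:=1-\psi_K$ is a harmonic profile of $\Gamma$. If $\widehat\Gamma$ is uniformly $S$-transient with respect to $K$, then there is $\varepsilon_*>0$ such that $\varepsilon_*\le 1-\psi_K(x)\le 1$ for all $x\in\Gamma$ (so the profile satisfies $h\approx1$).
   Context: $\widehat{\Gamma}$: infinite simple connected graph, symmetric edge weights $\mu_{xy}$ ($\ne0$ iff $x\sim y$), vertex weights $\pi>0$ with $\sum_{y\sim x}\mu_{xy}\le\pi(x)$; $\mathcal{K}(x,y)=\mu_{xy}/\pi(x)$ for $x\ne y$, $\mathcal{K}(x,x)=1-\sum_{z\sim x}\mu_{xz}/\pi(x)$; controlled weights ($\mu_{xy}/\pi(x)\ge1/C_c$ for $y\sim x$) and uniformly lazy ($\mathcal{K}(x,x)\ge C_e>0$). Harnack graph: $p(n,x,y)=\mathcal{K}^n(x,y)/\pi(y)$ satisfies $\frac{c_1}{V(x,\sqrt n)}e^{-d(x,y)^2/(c_2n)}\le p(n,x,y)\le\frac{c_3}{V(x,\sqrt n)}e^{-d(x,y)^2/(c_4 n)}$ for $n\ge d(x,y)$, with $d$ the graph distance and $V(x,r)=\pi(B(x,r))$. $\Gamma$ is the subgraph induced on the complement of $K$, $d_\Gamma$ its intrinsic graph distance; $\partial\Gamma$ is the set of vertices outside $\Gamma$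 adjacent to $\Gamma$. $\Gamma$ is inner uniform if there are $c_u,C_U>0$ such that any $x,y\in\Gamma$ are joined by a path $x=x_0,\dots,x_k=y$ in $\Gamma$ with $k\le C_U d_\Gamma(x,y)$ and $d(x_j,\partial\Gamma)\ge c_u(1+\min\{j,k-j\})$ for all $j$. A harmonic profile of $\Gamma$ is a function $h$ with $h>0$ on $\Gamma$, $h=0$ off $\Gamma$, and $h(x)=\sum_{y}\mathcal{K}(x,y)h(y)$ for all $x\in\Gamma$. $\psi_K(x)=\mathbb{P}^x(\tau_K<\infty)$ with $\tau_K$ the first hitting time of $K$. $\widehat\Gamma$ is $S$-transient w.r.t. $K$ if $\psi_K(x)<1$ for some $x$; uniformly $S$-transient if there are $L,\varepsilon>0$ with $\psi_K(x)\le1-\varepsilon$ whenever $d(x,K)\ge L$. *)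

theory Defs
  imports Complex_Main
begin

definition adj :: "('a \<Rightarrow> 'a \<Rightarrow> real) \<Rightarrow> 'a \<Rightarrow> 'a \<Rightarrow> bool" where
  "adj \<mu> x y \<longleftrightarrow> x \<noteq> y \<and> \<mu> x y \<noteq> 0"

definition nbhd :: "('a \<Rightarrow> 'a \<Rightarrow> real) \<Rightarrow> 'a \<Rightarrow> 'a set" where
  "nbhd \<mu> x = insert x {y. adj \<mu> x y}"

definition is_path_in :: "('a \<Rightarrow> 'a \<Rightarrow> real) \<Rightarrow> 'a set \<Rightarrow> (nat \<Rightarrow> 'a) \<Rightarrow> nat \<Rightarrow> 'a \<Rightarrow> 'a \<Rightarrow> bool" where
  "is_path_in \<mu> S p k x y \<longleftrightarrow> p 0 = x \<and> p k = y \<and> (\<forall>j\<le>k. p j \<in> S)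
     \<and> (\<forall>j<k. adj \<mu> (p j) (p (Suc j)))"

definition gdist_in :: "('a \<Rightarrow> 'a \<Rightarrow> real) \<Rightarrow> 'a set \<Rightarrow> 'a \<Rightarrow> 'a \<Rightarrow> nat" where
  "gdist_in \<mu> S x y = (LEAST k. \<exists>p. is_path_in \<mu> S p k x y)"

abbreviation gdist :: "('a \<Rightarrow> 'a \<Rightarrow> real) \<Rightarrow> 'a \<Rightarrow> 'a \<Rightarrow> nat" where
  "gdist \<mu> \<equiv> gdist_in \<mu> UNIV"

definition weighted_graph :: "('a \<Rightarrow> 'a \<Rightarrow> real) \<Rightarrow> ('a \<Rightarrow> real) \<Rightarrow> bool" where
  "weighted_graph \<mu> \<pi> \<longleftrightarrow>
     infinite (UNIV :: 'a set)
   \<and> (\<forall>x y. \<mu> x y = \<mu> y x)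
   \<and> (\<forall>x y. \<mu> x y \<ge> 0)
   \<and> (\<forall>x. \<mu> x x = 0)
   \<and> (\<forall>x. \<pi> x > 0)
   \<and> (\<forall>x. finite {y. adj \<mu> x y})
   \<and> (\<forall>x. (\<Sum>y\<in>{y. adj \<mu> x y}. \<mu> x y) \<le> \<pi> x)
   \<and> (\<forall>x y. \<exists>k p. is_path_in \<mu> UNIV p k x y)"

definition Kern :: "('a \<Rightarrow> 'a \<Rightarrow> real) \<Rightarrow> ('a \<Rightarrow> real) \<Rightarrow> 'a \<Rightarrow> 'a \<Rightarrow> real" where
  "Kern \<mu> \<pi> x y = (if x = y then 1 - (\<Sum>z\<in>{z. adj \<mu> x z}. \<mu> x z / \<pi> x)
                   else \<mu> x y / \<pi> x)"

definition controlled_weights :: "('a \<Rightarrow> 'a \<Rightarrow> real) \<Rightarrow> ('a \<Rightarrow> real) \<Rightarrow> bool" where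
  "controlled_weights \<mu> \<pi> \<longleftrightarrow> (\<exists>Cc>0. \<forall>x y. adj \<mu> x y \<longrightarrow> \<mu> x y / \<pi> x \<ge> 1 / Cc)"

definition uniformly_lazy :: "('a \<Rightarrow> 'a \<Rightarrow> real) \<Rightarrow> ('a \<Rightarrow> real) \<Rightarrow> bool" where
  "uniformly_lazy \<mu> \<pi> \<longleftrightarrow> (\<exists>Ce>0. \<forall>x. Kern \<mu> \<pi> x x \<ge> Ce)"

text \<open>Iterated kernel K^n(x,y) (K(x,.) is supported on nbhd x).\<close>
fun Kpow :: "('a \<Rightarrow> 'a \<Rightarrow> real) \<Rightarrow> ('a \<Rightarrow> real) \<Rightarrow> nat \<Rightarrow> 'a \<Rightarrow> 'a \<Rightarrow> real" where
  "Kpow \<mu> \<pi> 0 x y = (if x = y then 1 else 0)"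
| "Kpow \<mu> \<pi> (Suc n) x y = (\<Sum>z\<in>nbhd \<mu> x. Kern \<mu> \<pi> x z * Kpow \<mu> \<pi> n z y)"

definition heat_kernel :: "('a \<Rightarrow> 'a \<Rightarrow> real) \<Rightarrow> ('a \<Rightarrow> real) \<Rightarrow> nat \<Rightarrow> 'a \<Rightarrow> 'a \<Rightarrow> real" where
  "heat_kernel \<mu> \<pi> n x y = Kpow \<mu> \<pi> n x y / \<pi> y"

definition vol :: "('a \<Rightarrow> 'a \<Rightarrow> real) \<Rightarrow> ('a \<Rightarrow> real) \<Rightarrow> 'a \<Rightarrow> real \<Rightarrow> real" where
  "vol \<mu> \<pi> x r = (\<Sum>y\<in>{y. real (gdist \<mu> x y) \<le> r}. \<pi> y)"

definition harnack_graph :: "('a \<Rightarrow> 'a \<Rightarrow> real) \<Rightarrow> ('a \<Rightarrow> real) \<Rightarrow> bool" where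
  "harnack_graph \<mu> \<pi> \<longleftrightarrow> weighted_graph \<mu> \<pi> \<and>
     (\<exists>c1 c2 c3 c4. c1 > 0 \<and> c2 > 0 \<and> c3 > 0 \<and> c4 > 0 \<and>
       (\<forall>n x y. n \<ge> gdist \<mu> x y \<longrightarrow>
          c1 / vol \<mu> \<pi> x (sqrt (real n)) * exp (- (real (gdist \<mu> x y))\<^sup>2 / (c2 * real n))
            \<le> heat_kernel \<mu> \<pi> n x y
        \<and> heat_kernel \<mu> \<pi> n x y
            \<le> c3 / vol \<mu> \<pi> x (sqrt (real n)) * exp (- (real (gdist \<mu> x y))\<^sup>2 / (c4 * real n))))"

definition bdry :: "('a \<Rightarrow> 'a \<Rightarrow> real) \<Rightarrow> 'a set \<Rightarrow> 'a set" where
  "bdry \<mu> G = {z. z \<notin> G \<and> (\<exists>x\<in>G. adj \<mu> x z)}"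

definition inner_uniform :: "('a \<Rightarrow> 'a \<Rightarrow> real) \<Rightarrow> 'a set \<Rightarrow> bool" where
  "inner_uniform \<mu> G \<longleftrightarrow> (\<exists>cu CU. cu > 0 \<and> CU > 0 \<and>
     (\<forall>x\<in>G. \<forall>y\<in>G. \<exists>p k. is_path_in \<mu> G p k x y
        \<and> real k \<le> CU * real (gdist_in \<mu> G x y)
        \<and> (\<forall>j\<le>k. \<forall>z\<in>bdry \<mu> G.
              real (gdist \<mu> (p j) z) \<ge> cu * (1 + real (min j (k - j))))))"

definition harmonic_profile :: "('a \<Rightarrow> 'a \<Rightarrow> real) \<Rightarrow> ('a \<Rightarrow> real) \<Rightarrow> 'a set \<Rightarrow> ('a \<Rightarrow> real) \<Rightarrow> bool" where
  "harmonic_profile \<mu> \<pi> G h \<longleftrightarrow>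
     (\<forall>x\<in>G. h x > 0) \<and> (\<forall>x. x \<notin> G \<longrightarrow> h x = 0)
   \<and> (\<forall>x\<in>G. h x = (\<Sum>y\<in>nbhd \<mu> x. Kern \<mu> \<pi> x y * h y))"

text \<open>hit_le n x = P^x(\<tau>_K \<le> n), \<tau>_K = inf {t \<ge> 0. X_t \<in> K}.\<close>
fun hit_le :: "('a \<Rightarrow> 'a \<Rightarrow> real) \<Rightarrow> ('a \<Rightarrow> real) \<Rightarrow> 'a set \<Rightarrow> nat \<Rightarrow> 'a \<Rightarrow> real" where
  "hit_le \<mu> \<pi> K 0 x = (if x \<in> K then 1 else 0)"
| "hit_le \<mu> \<pi> K (Suc n) x =
     (if x \<in> K then 1 else (\<Sum>z\<in>nbhd \<mu> x. Kern \<mu> \<pi> x z * hit_le \<mu> \<pi> K n z))"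

text \<open>\<psi>_K(x) = P^x(\<tau>_K < \<infinity>) = sup_n P^x(\<tau>_K \<le> n).\<close>
definition psi :: "('a \<Rightarrow> 'a \<Rightarrow> real) \<Rightarrow> ('a \<Rightarrow> real) \<Rightarrow> 'a set \<Rightarrow> 'a \<Rightarrow> real" where
  "psi \<mu> \<pi> K x = (SUP n. hit_le \<mu> \<pi> K n x)"

definition S_transient :: "('a \<Rightarrow> 'a \<Rightarrow> real) \<Rightarrow> ('a \<Rightarrow> real) \<Rightarrow> 'a set \<Rightarrow> bool" where
  "S_transient \<mu> \<pi> K \<longleftrightarrow> (\<exists>x. psi \<mu> \<pi> K x < 1)"

definition unif_S_transient :: "('a \<Rightarrow> 'a \<Rightarrow> real) \<Rightarrow> ('a \<Rightarrow> real) \<Rightarrow> 'a set \<Rightarrow> bool" where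
  "unif_S_transient \<mu> \<pi> K \<longleftrightarrow> (\<exists>L \<epsilon>. L > 0 \<and> \<epsilon> > 0 \<and>
     (\<forall>x. (\<forall>z\<in>K. real (gdist \<mu> x z) \<ge> L) \<longrightarrow> psi \<mu> \<pi> K x \<le> 1 - \<epsilon>))"

end

theory Submission
  imports Defs
begin

lemma wg_facts:
  fixes \<mu> :: "'a \<Rightarrow> 'a \<Rightarrow> real"
  assumes "weighted_graph \<mu> \<pi>"
  shows "\<And>x y. \<mu> x y \<ge> 0" "\<And>x. \<pi> x > 0" "\<And>x. finite {y. adj \<mu> x y}"
    "\<And>x. (\<Sum>y\<in>{y. adj \<mu> x y}. \<mu> x y) \<le> \<pi> x"
    "\<And>x y. \<exists>k p. is_path_in \<mu> UNIV p k x y" "infinite (UNIV::'a set)"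
  using assms unfolding weighted_graph_def by simp_all

lemma Kern_nonneg:
  assumes "weighted_graph \<mu> \<pi>"
  shows "Kern \<mu> \<pi> x y \<ge> 0"
proof (cases "x = y")
  case True
  have p: "\<pi> x > 0" using wg_facts[OF assms] by auto
  have "(\<Sum>z\<in>{z. adj \<mu> x z}. \<mu> x z / \<pi> x) = (\<Sum>z\<in>{z. adj \<mu> x z}. \<mu> x z) / \<pi> x"
    by (simp add: sum_divide_distrib)
  also have "\<dots> \<le> 1" using p wg_facts(4)[OF assms, of x] by simp
  finally show ?thesis using True by (simp add: Kern_def)
next
  case False
  then show ?thesis using wg_facts(1,2)[OF assms]
    by (simp add: Kern_def divide_nonneg_pos)
qed

lemma Kern_sum:
  assumes "weighted_graph \<mu> \<pi>"
  shows "(\<Sum>z\<in>nbhd \<mu> x. Kern \<mu> \<pi> x z) = 1"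
proof -
  have fin: "finite {y. adj \<mu> x y}" using wg_facts[OF assms] by auto
  have nx: "x \<notin> {y. adj \<mu> x y}" by (simp add: adj_def)
  have "(\<Sum>z\<in>nbhd \<mu> x. Kern \<mu> \<pi> x z) = Kern \<mu> \<pi> x x + (\<Sum>z\<in>{y. adj \<mu> x y}. Kern \<mu> \<pi> x z)"
    unfolding nbhd_def using fin nx by simp
  also have "(\<Sum>z\<in>{y. adj \<mu> x y}. Kern \<mu> \<pi> x z) = (\<Sum>z\<in>{y. adj \<mu> x y}. \<mu> x z / \<pi> x)"
    by (rule sum.cong) (auto simp: Kern_def adj_def)
  finally show ?thesis by (simp add: Kern_def)
qed

lemma finite_nbhd:
  assumes "weighted_graph \<mu> \<pi>"
  shows "finite (nbhd \<mu> x)"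
  using wg_facts(3)[OF assms] by (simp add: nbhd_def)

lemma hit_bounds:
  assumes "weighted_graph \<mu> \<pi>"
  shows "0 \<le> hit_le \<mu> \<pi> K n x \<and> hit_le \<mu> \<pi> K n x \<le> 1"
proof (induction n arbitrary: x)
  case 0
  then show ?case by simp
next
  case (Suc n)
  have a: "0 \<le> (\<Sum>z\<in>nbhd \<mu> x. Kern \<mu> \<pi> x z * hit_le \<mu> \<pi> K n z)"
    using Suc Kern_nonneg[OF assms] by (intro sum_nonneg) auto
  have "(\<Sum>z\<in>nbhd \<mu> x. Kern \<mu> \<pi> x z * hit_le \<mu> \<pi> K n z) \<le> (\<Sum>z\<in>nbhd \<mu> x. Kern \<mu> \<pi> x z)"
    using Suc Kern_nonneg[OF assms] by (intro sum_mono) (simp add: mult_left_le)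
  then show ?case using a Kern_sum[OF assms] by simp
qed

lemma hit_mono:
  assumes "weighted_graph \<mu> \<pi>"
  shows "hit_le \<mu> \<pi> K n x \<le> hit_le \<mu> \<pi> K (Suc n) x"
proof (induction n arbitrary: x)
  case 0
  have "0 \<le> (\<Sum>z\<in>nbhd \<mu> x. Kern \<mu> \<pi> x z * hit_le \<mu> \<pi> K 0 z)"
    using hit_bounds[OF assms] Kern_nonneg[OF assms] by (intro sum_nonneg) auto
  then show ?case by simp
next
  case (Suc n)
  have "(\<Sum>z\<in>nbhd \<mu> x. Kern \<mu> \<pi> x z * hit_le \<mu> \<pi> K n z)
      \<le> (\<Sum>z\<in>nbhd \<mu> x. Kern \<mu> \<pi> x z * hit_le \<mu> \<pi> K (Suc n) z)"
    using Suc Kern_nonneg[OF assms] by (intro sum_mono mult_left_mono) auto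
  then show ?case by simp
qed

lemma psi_lim:
  assumes "weighted_graph \<mu> \<pi>"
  shows "(\<lambda>n. hit_le \<mu> \<pi> K n x) \<longlonglongrightarrow> psi \<mu> \<pi> K x"
    and "0 \<le> psi \<mu> \<pi> K x" "psi \<mu> \<pi> K x \<le> 1"
proof -
  have inc: "incseq (\<lambda>n. hit_le \<mu> \<pi> K n x)"
    using hit_mono[OF assms] by (intro incseq_SucI) auto
  have bdd: "bdd_above (range (\<lambda>n. hit_le \<mu> \<pi> K n x))"
    using hit_bounds[OF assms] by (intro bdd_aboveI[where M=1]) auto
  show "(\<lambda>n. hit_le \<mu> \<pi> K n x) \<longlonglongrightarrow> psi \<mu> \<pi> K x"
    unfolding psi_def by (rule LIMSEQ_incseq_SUP[OF bdd inc])
  have "hit_le \<mu> \<pi> K 0 x \<le> psi \<mu> \<pi> K x"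
    unfolding psi_def by (rule cSUP_upper[OF _ bdd]) auto
  then show "0 \<le> psi \<mu> \<pi> K x" using hit_bounds[OF assms, of K 0 x] by linarith
  show "psi \<mu> \<pi> K x \<le> 1"
    unfolding psi_def using hit_bounds[OF assms] by (intro cSUP_least) auto
qed

lemma psi_K:
  assumes "x \<in> K"
  shows "psi \<mu> \<pi> K x = 1"
proof -
  have "\<And>n. hit_le \<mu> \<pi> K n x = 1" using assms by (case_tac n) auto
  then show ?thesis by (simp add: psi_def)
qed

lemma psi_harm:
  assumes "weighted_graph \<mu> \<pi>" "x \<notin> K"
  shows "psi \<mu> \<pi> K x = (\<Sum>z\<in>nbhd \<mu> x. Kern \<mu> \<pi> x z * psi \<mu> \<pi> K z)"
proof -
  have "(\<lambda>n. hit_le \<mu> \<pi> K (Suc n) x) \<longlonglongrightarrow> (\<Sum>z\<in>nbhd \<mu> x. Kern \<mu> \<pi> x z * psi \<mu> \<pi> K z)"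
    using assms(2) by (simp, intro tendsto_sum tendsto_mult_left psi_lim[OF assms(1)])
  moreover have "(\<lambda>n. hit_le \<mu> \<pi> K (Suc n) x) \<longlonglongrightarrow> psi \<mu> \<pi> K x"
    using psi_lim(1)[OF assms(1)] by (rule LIMSEQ_Suc)
  ultimately show ?thesis using LIMSEQ_unique by blast
qed

lemma h_harm:
  assumes "weighted_graph \<mu> \<pi>" "x \<notin> K"
  shows "1 - psi \<mu> \<pi> K x = (\<Sum>z\<in>nbhd \<mu> x. Kern \<mu> \<pi> x z * (1 - psi \<mu> \<pi> K z))"
  using psi_harm[OF assms] Kern_sum[OF assms(1), of x]
  by (simp add: right_diff_distrib sum_subtractf)

lemma h_step:
  assumes "weighted_graph \<mu> \<pi>" "x \<notin> K" "z \<in> nbhd \<mu> x"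
  shows "Kern \<mu> \<pi> x z * (1 - psi \<mu> \<pi> K z) \<le> 1 - psi \<mu> \<pi> K x"
proof -
  have "Kern \<mu> \<pi> x z * (1 - psi \<mu> \<pi> K z) \<le> (\<Sum>z\<in>nbhd \<mu> x. Kern \<mu> \<pi> x z * (1 - psi \<mu> \<pi> K z))"
    using assms(3) finite_nbhd[OF assms(1)] Kern_nonneg[OF assms(1)] psi_lim(3)[OF assms(1)]
    by (intro member_le_sum) auto
  then show ?thesis using h_harm[OF assms(1,2)] by simp
qed

lemma Kern_pos:
  assumes "weighted_graph \<mu> \<pi>" "adj \<mu> x z"
  shows "Kern \<mu> \<pi> x z > 0"
  using assms wg_facts(1)[OF assms(1), of x z] wg_facts(2)[OF assms(1), of x]
  by (auto simp: Kern_def adj_def)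


lemma gdist_path:
  assumes "weighted_graph \<mu> \<pi>"
  shows "\<exists>p. is_path_in \<mu> UNIV p (gdist \<mu> x y) x y"
proof -
  obtain k p where "is_path_in \<mu> UNIV p k x y" using wg_facts(5)[OF assms] by blast
  then show ?thesis unfolding gdist_in_def
    using LeastI_ex[of "\<lambda>k. \<exists>p. is_path_in \<mu> UNIV p k x y"] by blast
qed

lemma gdist_le:
  assumes "is_path_in \<mu> UNIV p k x y"
  shows "gdist \<mu> x y \<le> k"
  unfolding gdist_in_def using assms by (intro Least_le) blast

definition reach where "reach \<mu> k x = {y. \<exists>p. is_path_in \<mu> UNIV p k x y}"

lemma reach_finite:
  assumes "weighted_graph \<mu> \<pi>"
  shows "finite (reach \<mu> k x)"
proof (induction k)
  case 0
  have "reach \<mu> 0 x \<subseteq> {x}" by (auto simp: reach_def is_path_in_def)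
  then show ?case using finite_subset by blast
next
  case (Suc k)
  have "reach \<mu> (Suc k) x \<subseteq> (\<Union>z\<in>reach \<mu> k x. {y. adj \<mu> z y})"
  proof
    fix y assume "y \<in> reach \<mu> (Suc k) x"
    then obtain p where p: "is_path_in \<mu> UNIV p (Suc k) x y" by (auto simp: reach_def)
    then have "is_path_in \<mu> UNIV p k x (p k)" by (auto simp: is_path_in_def)
    moreover have "adj \<mu> (p k) y" using p by (auto simp: is_path_in_def)
    ultimately show "y \<in> (\<Union>z\<in>reach \<mu> k x. {y. adj \<mu> z y})" by (auto simp: reach_def)
  qed
  moreover have "finite (\<Union>z\<in>reach \<mu> k x. {y. adj \<mu> z y})"
    using Suc wg_facts(3)[OF assms] by auto
  ultimately show ?case using finite_subset by blast
qed

lemma ball_finite: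
  assumes "weighted_graph \<mu> \<pi>"
  shows "finite {y. gdist \<mu> x y < R}"
proof -
  have "{y. gdist \<mu> x y < R} \<subseteq> (\<Union>k<R. reach \<mu> k x)"
    using gdist_path[OF assms] by (auto simp: reach_def)
  moreover have "finite (\<Union>k<R. reach \<mu> k x)" using reach_finite[OF assms] by auto
  ultimately show ?thesis using finite_subset by blast
qed

lemma bdry_closer:
  assumes "weighted_graph \<mu> \<pi>" "x \<notin> K" "z \<in> K"
  shows "\<exists>z'\<in>bdry \<mu> (- K). gdist \<mu> x z' \<le> gdist \<mu> x z"
proof -
  obtain p where p: "is_path_in \<mu> UNIV p (gdist \<mu> x z) x z" using gdist_path[OF assms(1)] by blast
  define n where "n = gdist \<mu> x z"
  have ex: "\<exists>i. p i \<in> K" using p assms(3) by (intro exI[of _ "gdist \<mu> x z"]) (simp add: is_path_in_def)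
  define i where "i = (LEAST i. p i \<in> K)"
  have pi: "p i \<in> K" unfolding i_def using ex by (rule LeastI_ex)
  have iln: "i \<le> n" unfolding i_def n_def using p assms(3) by (intro Least_le) (auto simp: is_path_in_def)
  have i0: "i \<noteq> 0"
  proof
    assume "i = 0" then show False using pi p assms(2) by (simp add: is_path_in_def)
  qed
  then obtain j where j: "i = Suc j" by (cases i) auto
  have pj: "p j \<notin> K" using j unfolding i_def by (metis lessI not_less_Least)
  have "adj \<mu> (p j) (p i)" using p j iln by (auto simp: is_path_in_def n_def)
  then have "p i \<in> bdry \<mu> (- K)" using pi pj by (auto simp: bdry_def)
  moreover have "is_path_in \<mu> UNIV p i x (p i)" using p iln by (auto simp: is_path_in_def n_def)
  then have "gdist \<mu> x (p i) \<le> gdist \<mu> x z" using gdist_le iln n_def by fastforce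
  ultimately show ?thesis by blast
qed

lemma chain_bound:
  assumes "weighted_graph \<mu> \<pi>" "is_path_in \<mu> (- K) p k x y"
    and c: "c > 0" "\<And>u v. adj \<mu> u v \<Longrightarrow> c \<le> Kern \<mu> \<pi> u v"
  shows "j \<le> k \<Longrightarrow> c ^ j * (1 - psi \<mu> \<pi> K (p j)) \<le> 1 - psi \<mu> \<pi> K x"
proof (induction j)
  case 0
  then show ?case using assms(2) by (simp add: is_path_in_def)
next
  case (Suc j)
  have ad: "adj \<mu> (p j) (p (Suc j))" and pjK: "p j \<notin> K"
    using assms(2) Suc.prems by (auto simp: is_path_in_def)
  have nb: "p (Suc j) \<in> nbhd \<mu> (p j)" using ad by (simp add: nbhd_def)
  have h0: "0 \<le> 1 - psi \<mu> \<pi> K (p (Suc j))" using psi_lim(3)[OF assms(1)] by simp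
  have "c * (1 - psi \<mu> \<pi> K (p (Suc j))) \<le> Kern \<mu> \<pi> (p j) (p (Suc j)) * (1 - psi \<mu> \<pi> K (p (Suc j)))"
    using c(2)[OF ad] h0 by (rule mult_right_mono)
  also have "\<dots> \<le> 1 - psi \<mu> \<pi> K (p j)" by (rule h_step[OF assms(1) pjK nb])
  finally have "c ^ j * (c * (1 - psi \<mu> \<pi> K (p (Suc j)))) \<le> c ^ j * (1 - psi \<mu> \<pi> K (p j))"
    using c(1) by (simp add: mult_left_mono)
  also have "\<dots> \<le> 1 - psi \<mu> \<pi> K x" using Suc by simp
  finally show ?case by (simp add: mult_ac)
qed

theorem lemma3p11:
  fixes \<mu> :: "'a \<Rightarrow> 'a \<Rightarrow> real" and \<pi> :: "'a \<Rightarrow> real" and K :: "'a set"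
  assumes "harnack_graph \<mu> \<pi>"
    and "controlled_weights \<mu> \<pi>"
    and "uniformly_lazy \<mu> \<pi>"
    and "infinite (- K)"
    and "inner_uniform \<mu> (- K)"
  shows "(S_transient \<mu> \<pi> K \<longrightarrow> harmonic_profile \<mu> \<pi> (- K) (\<lambda>x. 1 - psi \<mu> \<pi> K x))
       \<and> (unif_S_transient \<mu> \<pi> K \<longrightarrow>
            (\<exists>\<epsilon>>0. \<forall>x\<in>- K. \<epsilon> \<le> 1 - psi \<mu> \<pi> K x \<and> 1 - psi \<mu> \<pi> K x \<le> 1))"
proof (intro conjI impI)
  have wg: "weighted_graph \<mu> \<pi>" using assms(1) by (simp add: harnack_graph_def)
  obtain cu CU where cu: "cu > 0" and iu: "\<forall>x\<in>- K. \<forall>y\<in>- K. \<exists>p k. is_path_in \<mu> (- K) p k x y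
        \<and> real k \<le> CU * real (gdist_in \<mu> (- K) x y)
        \<and> (\<forall>j\<le>k. \<forall>z\<in>bdry \<mu> (- K).
              real (gdist \<mu> (p j) z) \<ge> cu * (1 + real (min j (k - j))))"
    using assms(5) unfolding inner_uniform_def by blast
  {
    assume "S_transient \<mu> \<pi> K"
    then obtain x0 where x0: "psi \<mu> \<pi> K x0 < 1" by (auto simp: S_transient_def)
    then have x0K: "x0 \<in> - K" using psi_K[of x0 K \<mu> \<pi>] by auto
    have propg: "psi \<mu> \<pi> K v = 1" if "u \<notin> K" "psi \<mu> \<pi> K u = 1" "adj \<mu> u v" for u v
    proof -
      have "(\<Sum>z\<in>nbhd \<mu> u. Kern \<mu> \<pi> u z * (1 - psi \<mu> \<pi> K z)) = 0"
        using h_harm[OF wg that(1)] that(2) by simp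
      moreover have "\<forall>z\<in>nbhd \<mu> u. 0 \<le> Kern \<mu> \<pi> u z * (1 - psi \<mu> \<pi> K z)"
        using Kern_nonneg[OF wg] psi_lim(3)[OF wg] by simp
      ultimately have "\<forall>z\<in>nbhd \<mu> u. Kern \<mu> \<pi> u z * (1 - psi \<mu> \<pi> K z) = 0"
        by (subst (asm) sum_nonneg_eq_0_iff[OF finite_nbhd[OF wg]]) simp_all
      moreover have "v \<in> nbhd \<mu> u" using that(3) by (simp add: nbhd_def)
      ultimately have "Kern \<mu> \<pi> u v * (1 - psi \<mu> \<pi> K v) = 0" by blast
      then show ?thesis using Kern_pos[OF wg that(3)] by simp
    qed
    have pos: "psi \<mu> \<pi> K x < 1" if xK: "x \<in> - K" for x
    proof (rule ccontr)
      assume "\<not> psi \<mu> \<pi> K x < 1"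
      then have x1: "psi \<mu> \<pi> K x = 1" using psi_lim(3)[OF wg, of K x] by linarith
      obtain p k where p: "is_path_in \<mu> (- K) p k x x0" using iu xK x0K by blast
      have "j \<le> k \<Longrightarrow> psi \<mu> \<pi> K (p j) = 1" for j
      proof (induction j)
        case 0 then show ?case using p x1 by (simp add: is_path_in_def)
      next
        case (Suc j)
        have "p j \<notin> K" "adj \<mu> (p j) (p (Suc j))" using p Suc.prems by (auto simp: is_path_in_def)
        moreover have "psi \<mu> \<pi> K (p j) = 1" using Suc by simp
        ultimately show ?case using propg by blast
      qed
      then have "psi \<mu> \<pi> K x0 = 1" using p by (auto simp: is_path_in_def)
      then show False using x0 by simp
    qed
    show "harmonic_profile \<mu> \<pi> (- K) (\<lambda>x. 1 - psi \<mu> \<pi> K x)"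
      unfolding harmonic_profile_def
    proof (intro conjI ballI allI impI)
      fix x assume "x \<in> - K" then show "1 - psi \<mu> \<pi> K x > 0" using pos by simp
    next
      fix x assume "x \<notin> - K" then show "1 - psi \<mu> \<pi> K x = 0" using psi_K[of x K \<mu> \<pi>] by simp
    next
      fix x assume "x \<in> - K"
      then show "1 - psi \<mu> \<pi> K x = (\<Sum>y\<in>nbhd \<mu> x. Kern \<mu> \<pi> x y * (1 - psi \<mu> \<pi> K y))"
        using h_harm[OF wg] by simp
    qed
  }
  {
    assume "unif_S_transient \<mu> \<pi> K"
    then obtain L \<epsilon> where L: "L > 0" "\<epsilon> > 0"
      and far: "\<And>x. (\<forall>z\<in>K. real (gdist \<mu> x z) \<ge> L) \<Longrightarrow> psi \<mu> \<pi> K x \<le> 1 - \<epsilon>"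
      by (auto simp: unif_S_transient_def)
    obtain Cc where Cc: "Cc > 0" "\<And>x y. adj \<mu> x y \<Longrightarrow> \<mu> x y / \<pi> x \<ge> 1 / Cc"
      using assms(2) by (auto simp: controlled_weights_def)
    have KC: "1 / Cc \<le> Kern \<mu> \<pi> u v" if "adj \<mu> u v" for u v
      using Cc(2)[OF that] that by (simp add: Kern_def adj_def)
    define m where "m = nat \<lceil>L / cu\<rceil>"
    have mL: "cu * (1 + real m) \<ge> L"
    proof -
      have "real m \<ge> L / cu" unfolding m_def by linarith
      then have "cu * real m \<ge> L" using cu by (simp add: field_simps)
      then show ?thesis using cu by (simp add: distrib_left)
    qed
    show "\<exists>\<epsilon>>0. \<forall>x\<in>- K. \<epsilon> \<le> 1 - psi \<mu> \<pi> K x \<and> 1 - psi \<mu> \<pi> K x \<le> 1"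
    proof (intro exI[of _ "(1 / Cc) ^ m * \<epsilon>"] conjI ballI)
      show "0 < (1 / Cc) ^ m * \<epsilon>" using Cc L by simp
      fix x assume xK: "x \<in> - K"
      show "1 - psi \<mu> \<pi> K x \<le> 1" using psi_lim(2)[OF wg] by simp
      have "infinite (- K - {y. gdist \<mu> x y < 2 * m})"
        using assms(4) ball_finite[OF wg] by (rule Diff_infinite_finite[rotated])
      then have "- K - {y. gdist \<mu> x y < 2 * m} \<noteq> {}" by (intro notI) simp
      then obtain y where y: "y \<in> - K" "\<not> gdist \<mu> x y < 2 * m" by blast
      obtain p k where p: "is_path_in \<mu> (- K) p k x y"
        and pb: "\<forall>j\<le>k. \<forall>z\<in>bdry \<mu> (- K). real (gdist \<mu> (p j) z) \<ge> cu * (1 + real (min j (k - j)))"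
        using iu xK y(1) by blast
      have "is_path_in \<mu> UNIV p k x y" using p by (auto simp: is_path_in_def)
      then have "gdist \<mu> x y \<le> k" by (rule gdist_le)
      then have k2m: "2 * m \<le> k" using y(2) by simp
      then have mink: "min m (k - m) = m" by simp
      have pmK: "p m \<notin> K" using p k2m by (auto simp: is_path_in_def)
      have "\<forall>z\<in>K. real (gdist \<mu> (p m) z) \<ge> L"
      proof
        fix z assume zK: "z \<in> K"
        obtain z' where z': "z' \<in> bdry \<mu> (- K)" "gdist \<mu> (p m) z' \<le> gdist \<mu> (p m) z"
          using bdry_closer[OF wg pmK zK] by blast
        have "L \<le> cu * (1 + real (min m (k - m)))" using mL mink by simp
        also have "\<dots> \<le> real (gdist \<mu> (p m) z')" using pb[rule_format, of m z'] z'(1) k2m by simp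
        also have "\<dots> \<le> real (gdist \<mu> (p m) z)" using z'(2) by simp
        finally show "real (gdist \<mu> (p m) z) \<ge> L" .
      qed
      then have "psi \<mu> \<pi> K (p m) \<le> 1 - \<epsilon>" by (rule far)
      then have "(1 / Cc) ^ m * \<epsilon> \<le> (1 / Cc) ^ m * (1 - psi \<mu> \<pi> K (p m))"
        using Cc(1) by (intro mult_left_mono) auto
      also have "\<dots> \<le> 1 - psi \<mu> \<pi> K x"
        using chain_bound[OF wg p _ KC, of m] Cc(1) k2m by simp
      finally show "(1 / Cc) ^ m * \<epsilon> \<le> 1 - psi \<mu> \<pi> K x" .
    qed
  }
qed

end
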